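(* Let $\mathsf a$ be a symmetric $L$-density and let $K>0$. Define $$\lfloor\mathsf a\rfloor_{\mathrm{sym}K}=\gamma\big(p\,\Delta_{-K}+(1-p)\,\Delta_{K}\big)+\mathsf a\,\mathbb 1_{\{|x|<K\}},$$ where $p=e^{-K}/(1+e^{-K})$, $\gamma=\mathbb P_{\mathsf a}\{|X|\ge K\}$, and $\mathsf a\,\mathbb 1_{\{|x|<K\}}$ is the restriction of $\mathsf a$ to $(-K,K)$. Then: (i) $\lfloor\mathsf a\rfloor_{\mathrm{sym}K}$ is a symmetric $L$-density; (ii) $\lfloor\mathsf a\rfloor_K\prec\lfloor\mathsf a\rfloor_{\mathrm{sym}K}$.
   Context: - An $L$-density is a probability distribution on $[-\infty,+\infty]$, thought of as the law of a log-likelihood ratio conditioned on transmitted bit $X=+1$. - An $L$-density $\mathsf a$ is symmetric if $\int f(-x)\,\mathsf a(dx)=\int e^{-x}f(x)\,\mathsf a(dx)$ for all bounded measurable $f$ (with $e^{-\infty}=0$). Equivalently, $e^{-x/2}\mathsf a(x)$ is even. - $\Delta_z$ denotes the point mass at $z$. - Saturation: $\lfloor x\rfloor_K=\min(K,|x|)\,\mathrm{sgn}(x)$, and $\lfloor\mathsf a\rfloor_K$ is the law of $\lfloor X\rfloor_K$ for $X\sim\mathsf a$. - Degradation: view an $L$-density $\mathsf a$ as a binary-input channel whose output has law $\mathsf a$ given input $+1$ and the mirror image of $\mathsf a$ given input $-1$. Then $\mathsf a\prec\mathsf b$ ($\mathsf b$ degraded with respect to $\mathsf a$) means there is a Markov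 kernel $W$ on $[-\infty,\infty]$ with $W(-y,-B)=W(y,B)$ for all $y$ and measurable $B$, such that $\mathsf b(B)=\int W(y,B)\,\mathsf a(dy)$. *)

theory Defs
  imports "HOL-Probability.Probability"
begin

definition L_density :: "ereal measure \<Rightarrow> bool" where
  "L_density a \<longleftrightarrow> prob_space a \<and> sets a = sets (borel :: ereal measure)"

fun exp_neg_ereal :: "ereal \<Rightarrow> ennreal" where
  "exp_neg_ereal (ereal r) = ennreal (exp (- r))"
| "exp_neg_ereal PInfty = 0"
| "exp_neg_ereal MInfty = \<infinity>"

text \<open>Symmetry: int f(-x) a(dx) = int e^{-x} f(x) a(dx) for bounded measurable f
  (stated for nonnegative f; the signed case follows by splitting f = f+ - f-).\<close>
definition symmetric_L :: "ereal measure \<Rightarrow> bool" where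
  "symmetric_L a \<longleftrightarrow>
     (\<forall>f :: ereal \<Rightarrow> real. f \<in> borel_measurable borel \<longrightarrow> bounded (range f) \<longrightarrow> (\<forall>x. 0 \<le> f x) \<longrightarrow>
        (\<integral>\<^sup>+ x. ennreal (f (- x)) \<partial>a) = (\<integral>\<^sup>+ x. exp_neg_ereal x * ennreal (f x) \<partial>a))"

definition sat :: "real \<Rightarrow> ereal \<Rightarrow> ereal" where
  "sat K x = min (ereal K) \<bar>x\<bar> * sgn x"

definition sat_density :: "real \<Rightarrow> ereal measure \<Rightarrow> ereal measure" where
  "sat_density K a = distr a borel (sat K)"

definition symsat_density :: "real \<Rightarrow> ereal measure \<Rightarrow> ereal measure" where
  "symsat_density K a =
     (let p = exp (- K) / (1 + exp (- K));
          \<gamma> = measure a {x. ereal K \<le> \<bar>x\<bar>}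
      in measure_of UNIV (sets borel)
           (\<lambda>B. ennreal (\<gamma> * p) * indicator B (- ereal K)
              + ennreal (\<gamma> * (1 - p)) * indicator B (ereal K)
              + emeasure a (B \<inter> {x. \<bar>x\<bar> < ereal K})))"

definition degraded :: "ereal measure \<Rightarrow> ereal measure \<Rightarrow> bool" where
  "degraded a b \<longleftrightarrow>
     (\<exists>W :: ereal \<Rightarrow> ereal measure.
        W \<in> measurable borel (prob_algebra borel) \<and>
        (\<forall>y. \<forall>B \<in> sets borel. emeasure (W (- y)) (uminus ` B) = emeasure (W y) B) \<and>
        (\<forall>B \<in> sets borel. emeasure b B = (\<integral>\<^sup>+ y. emeasure (W y) B \<partial>a)))"

end

theory Submission
  imports Defs
begin


lemma nn_integral_sum3:
  fixes f :: "'a \<Rightarrow> ennreal"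
  assumes s1: "sets N1 = sets M" and s2: "sets N2 = sets M" and s3: "sets N3 = sets M"
    and e: "\<And>A. A \<in> sets M \<Longrightarrow> emeasure M A = emeasure N1 A + emeasure N2 A + emeasure N3 A"
    and f: "f \<in> borel_measurable M"
  shows "(\<integral>\<^sup>+x. f x \<partial>M) = (\<integral>\<^sup>+x. f x \<partial>N1) + (\<integral>\<^sup>+x. f x \<partial>N2) + (\<integral>\<^sup>+x. f x \<partial>N3)"
proof -
  have sp1: "space N1 = space M" by (rule sets_eq_imp_space_eq[OF s1])
  have sp2: "space N2 = space M" by (rule sets_eq_imp_space_eq[OF s2])
  have sp3: "space N3 = space M" by (rule sets_eq_imp_space_eq[OF s3])
  have mc: "\<And>u. u \<in> borel_measurable M \<Longrightarrow> u \<in> borel_measurable N1 \<and> u \<in> borel_measurable N2 \<and> u \<in> borel_measurable N3"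
    by (simp add: measurable_cong_sets[OF s1 refl] measurable_cong_sets[OF s2 refl] measurable_cong_sets[OF s3 refl])
  show ?thesis
  using f
  proof induction
    case (cong f g)
    have eq: "(\<integral>\<^sup>+x. f x \<partial>N) = (\<integral>\<^sup>+x. g x \<partial>N)" if "space N = space M" for N
      using cong(3) that by (intro nn_integral_cong) simp
    show ?case using eq[OF sp1] eq[OF sp2] eq[OF sp3] eq[OF refl] cong(4) by simp
  next
    case (set A)
    then show ?case using e s1 s2 s3 by simp
  next
    case (mult u c)
    show ?case using mult.IH \<open>u \<in> borel_measurable M\<close> mc[OF \<open>u \<in> borel_measurable M\<close>] by (simp add: nn_integral_cmult distrib_left)
  next
    case (add u v)
    have i: "(\<integral>\<^sup>+x. v x + u x \<partial>N) = (\<integral>\<^sup>+x. v x \<partial>N) + (\<integral>\<^sup>+x. u x \<partial>N)"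
      if "u \<in> borel_measurable N" "v \<in> borel_measurable N" for N
      using that by (rule_tac nn_integral_add) auto
    have ac6: "(a1+b1+c1)+(a2+b2+c2) = (a1+a2)+(b1+b2)+(c1+c2)" for a1 b1 c1 a2 b2 c2 :: ennreal
      by (simp add: ac_simps)
    show ?case
      unfolding i[OF \<open>u \<in> borel_measurable M\<close> \<open>v \<in> borel_measurable M\<close>] i[OF conjunct1[OF mc[OF \<open>u \<in> borel_measurable M\<close>]] conjunct1[OF mc[OF \<open>v \<in> borel_measurable M\<close>]]]
        i[OF conjunct1[OF conjunct2[OF mc[OF \<open>u \<in> borel_measurable M\<close>]]] conjunct1[OF conjunct2[OF mc[OF \<open>v \<in> borel_measurable M\<close>]]]]
        i[OF conjunct2[OF conjunct2[OF mc[OF \<open>u \<in> borel_measurable M\<close>]]] conjunct2[OF conjunct2[OF mc[OF \<open>v \<in> borel_measurable M\<close>]]]]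
        add.IH by (rule ac6)
  next
    case (seq U)
    have mono: "(\<integral>\<^sup>+x. (SUP i. U i) x \<partial>N) = (SUP i. \<integral>\<^sup>+x. U i x \<partial>N)"
      if "\<And>i. U i \<in> borel_measurable N" for N
      using \<open>incseq U\<close> that by (simp add: nn_integral_monotone_convergence_SUP image_comp)
    have inc: "incseq (\<lambda>i. \<integral>\<^sup>+x. U i x \<partial>N)" for N
      using \<open>incseq U\<close> unfolding incseq_def le_fun_def by (blast intro: nn_integral_mono)
    have m1: "\<And>i. U i \<in> borel_measurable N1" and m2: "\<And>i. U i \<in> borel_measurable N2"
      and m3: "\<And>i. U i \<in> borel_measurable N3" using mc[OF seq.hyps(1)] by blast+
    have "(\<integral>\<^sup>+x. (SUP i. U i) x \<partial>M) = (SUP i. (\<integral>\<^sup>+x. U i x \<partial>N1) + (\<integral>\<^sup>+x. U i x \<partial>N2) + (\<integral>\<^sup>+x. U i x \<partial>N3))"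
      unfolding mono[OF seq.hyps(1)] seq.IH ..
    also have "\<dots> = (SUP i. (\<integral>\<^sup>+x. U i x \<partial>N1) + (\<integral>\<^sup>+x. U i x \<partial>N2)) + (SUP i. (\<integral>\<^sup>+x. U i x \<partial>N3))"
      by (rule ennreal_SUP_add) (use inc in \<open>auto intro!: add_mono simp: incseq_def\<close>)
    also have "(SUP i. (\<integral>\<^sup>+x. U i x \<partial>N1) + (\<integral>\<^sup>+x. U i x \<partial>N2)) = (SUP i. (\<integral>\<^sup>+x. U i x \<partial>N1)) + (SUP i. (\<integral>\<^sup>+x. U i x \<partial>N2))"
      by (rule ennreal_SUP_add) (rule inc)+
    finally show ?case
      unfolding mono[OF m1] mono[OF m2] mono[OF m3] .
  qed
qed



definition msum3 :: "'a measure \<Rightarrow> 'a measure \<Rightarrow> 'a measure \<Rightarrow> 'a measure" where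
  "msum3 A B C = measure_of (space A) (sets A) (\<lambda>X. emeasure A X + emeasure B X + emeasure C X)"

lemma
  assumes sB: "sets B = sets A" and sC: "sets C = sets A"
  shows sets_msum3: "sets (msum3 A B C) = sets A"
    and space_msum3: "space (msum3 A B C) = space A"
    and emeasure_msum3: "X \<in> sets A \<Longrightarrow> emeasure (msum3 A B C) X = emeasure A X + emeasure B X + emeasure C X"
proof -
  show "sets (msum3 A B C) = sets A" unfolding msum3_def by simp
  show "space (msum3 A B C) = space A" unfolding msum3_def by simp
  assume X: "X \<in> sets A"
  show "emeasure (msum3 A B C) X = emeasure A X + emeasure B X + emeasure C X"
    unfolding msum3_def
  proof (rule emeasure_measure_of_sigma[OF _ _ _ X])
    show "sigma_algebra (space A) (sets A)" ..
    show "positive (sets A) (\<lambda>X. emeasure A X + emeasure B X + emeasure C X)"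
      by (simp add: positive_def)
    show "countably_additive (sets A) (\<lambda>X. emeasure A X + emeasure B X + emeasure C X)"
    proof (rule countably_additiveI)
      fix F :: "nat \<Rightarrow> _" assume F: "range F \<subseteq> sets A" "disjoint_family F"
      have FB: "range F \<subseteq> sets B" and FC: "range F \<subseteq> sets C" using F sB sC by auto
      have "(\<Sum>i. emeasure A (F i) + emeasure B (F i) + emeasure C (F i))
          = (\<Sum>i. emeasure A (F i) + emeasure B (F i)) + (\<Sum>i. emeasure C (F i))"
        by (rule suminf_add[symmetric]) (auto intro: summableI)
      also have "(\<Sum>i. emeasure A (F i) + emeasure B (F i)) = (\<Sum>i. emeasure A (F i)) + (\<Sum>i. emeasure B (F i))"
        by (rule suminf_add[symmetric]) (auto intro: summableI)
      finally show "(\<Sum>i. emeasure A (F i) + emeasure B (F i) + emeasure C (F i)) =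
           emeasure A (\<Union>i. F i) + emeasure B (\<Union>i. F i) + emeasure C (\<Union>i. F i)"
        using suminf_emeasure[OF F] suminf_emeasure[OF FB F(2)] suminf_emeasure[OF FC F(2)] by simp
    qed
  qed
qed

lemma nn_integral_msum3:
  assumes sB: "sets B = sets A" and sC: "sets C = sets A" and f: "f \<in> borel_measurable A"
  shows "(\<integral>\<^sup>+x. f x \<partial>msum3 A B C) = (\<integral>\<^sup>+x. f x \<partial>A) + (\<integral>\<^sup>+x. f x \<partial>B) + (\<integral>\<^sup>+x. f x \<partial>C)"
  by (rule nn_integral_sum3) (use sB sC f sets_msum3[OF sB sC] emeasure_msum3[OF sB sC] in \<open>auto simp: measurable_cong_sets[OF sB refl] measurable_cong_sets[OF sC refl]\<close>)

lemma exp_neg_ereal_inf[simp]: "exp_neg_ereal \<infinity> = 0" "exp_neg_ereal (-\<infinity>) = \<infinity>"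
  using exp_neg_ereal.simps(2,3) by simp_all

lemma exp_neg_ereal_alt:
  "exp_neg_ereal x = (if x = \<infinity> then 0 else if x = -\<infinity> then \<infinity> else ennreal (exp (- real_of_ereal x)))"
  by (cases x) auto

lemma exp_neg_ereal_measurable[measurable]: "exp_neg_ereal \<in> borel_measurable borel"
  unfolding exp_neg_ereal_alt[abs_def] by measurable

lemma sat_alt: "K > 0 \<Longrightarrow> sat K x = (if ereal K \<le> x then ereal K else if x \<le> - ereal K then - ereal K else x)"
  by (cases x) (auto simp: sat_def min_def sgn_if)

lemma sat_measurable: assumes "K > 0" shows "sat K \<in> borel_measurable borel"
proof -
  have "sat K = (\<lambda>x. if ereal K \<le> x then ereal K else if x \<le> - ereal K then - ereal K else x)"
    using sat_alt[OF assms] by auto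
  then show ?thesis by simp
qed

lemma uminus_image_ereal: "uminus ` (B::ereal set) = uminus -` B"
  by (auto simp: image_iff) (metis ereal_uminus_uminus)

lemma uminus_image_sets: "B \<in> sets (borel :: ereal measure) \<Longrightarrow> uminus ` B \<in> sets borel"
proof -
  have m: "(\<lambda>x::ereal. - x) \<in> borel_measurable borel" by measurable
  assume "B \<in> sets (borel :: ereal measure)"
  from measurable_sets[OF m this] show ?thesis unfolding uminus_image_ereal by simp
qed

lemma indicator_uminus_image: "indicator (uminus ` (B::ereal set)) (- x) = indicator B x"
  unfolding uminus_image_ereal by (simp add: indicator_def)




lemma indicator_uminus_image': "indicator (uminus ` (B::ereal set)) x = (indicator B (- x) :: 'b::zero_neq_one)"
  unfolding uminus_image_ereal by (simp add: indicator_def)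

lemma ereal_abs_lt: "\<bar>x::ereal\<bar> < ereal K \<longleftrightarrow> - ereal K < x \<and> x < ereal K"
  by (cases x) auto

lemma ereal_abs_ge: "ereal K \<le> \<bar>x::ereal\<bar> \<longleftrightarrow> ereal K \<le> x \<or> x \<le> - ereal K"
  by (cases x) auto

lemma sets_S: "{x::ereal. \<bar>x\<bar> < ereal K} \<in> sets borel" by measurable
lemma sets_G: "{x::ereal. ereal K \<le> \<bar>x\<bar>} \<in> sets borel" by measurable
lemma sets_P: "{x::ereal. ereal K \<le> x} \<in> sets borel" by measurable
lemma sets_N: "{x::ereal. x \<le> - ereal K} \<in> sets borel" by measurable

lemma ennreal_lin:
  fixes q \<alpha> \<beta> :: real and u v :: ennreal
  assumes "0 \<le> q" "q \<le> 1" "0 \<le> \<alpha>" "0 \<le> \<beta>"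
  shows "(ennreal q * u + ennreal (1-q) * v + 0) * ennreal \<alpha> + (ennreal q * v + ennreal (1-q) * u + 0) * ennreal \<beta>
       = ennreal (\<alpha>*q + \<beta>*(1-q)) * u + ennreal (\<alpha>*(1-q)+\<beta>*q) * v"
proof -
  have "ennreal (\<alpha>*q + \<beta>*(1-q)) = ennreal \<alpha> * ennreal q + ennreal \<beta> * ennreal (1-q)"
    using assms by (simp add: ennreal_plus ennreal_mult)
  moreover have "ennreal (\<alpha>*(1-q)+\<beta>*q) = ennreal \<alpha> * ennreal (1-q) + ennreal \<beta> * ennreal q"
    using assms by (simp add: ennreal_plus ennreal_mult)
  ultimately show ?thesis by (simp add: algebra_simps)
qed


lemma symsat_rep:
  fixes K :: real and a :: "ereal measure"
  assumes sa: "sets a = sets borel"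
  defines "\<gamma> \<equiv> measure a {x. ereal K \<le> \<bar>x\<bar>}" and "p \<equiv> exp (- K) / (1 + exp (- K))"
  shows "symsat_density K a = msum3 (scale_measure (ennreal (\<gamma> * p)) (return borel (- ereal K)))
            (scale_measure (ennreal (\<gamma> * (1 - p))) (return borel (ereal K)))
            (density a (indicator {x. \<bar>x\<bar> < ereal K}))" (is "_ = msum3 ?R1 ?R2 ?D")
proof -
  have sp: "space ?R1 = UNIV" "sets ?R1 = sets borel" by (simp_all add: space_scale_measure)
  have "msum3 ?R1 ?R2 ?D = measure_of UNIV (sets borel) (\<lambda>X. emeasure ?R1 X + emeasure ?R2 X + emeasure ?D X)"
    unfolding msum3_def sp ..
  also have "\<dots> = symsat_density K a"
    unfolding symsat_density_def Let_def \<gamma>_def[symmetric] p_def[symmetric]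
  proof (rule measure_of_eq)
    show "sets borel \<subseteq> Pow UNIV" by simp
    fix X assume "X \<in> sigma_sets UNIV (sets (borel :: ereal measure))"
    then have X: "X \<in> sets borel" using sets.sigma_sets_eq[of borel] by (metis space_borel)
    have "emeasure ?D X = emeasure a (X \<inter> {x. \<bar>x\<bar> < ereal K})"
      using emeasure_restricted[of "{x. \<bar>x\<bar> < ereal K}" a X] sa X sets_S by (simp add: Int_commute)
    then show "emeasure ?R1 X + emeasure ?R2 X + emeasure ?D X =
          ennreal (\<gamma> * p) * indicator X (- ereal K) + ennreal (\<gamma> * (1 - p)) * indicator X (ereal K) +
          emeasure a (X \<inter> {x. \<bar>x\<bar> < ereal K})"
      using X by simp
  qed
  finally show ?thesis ..
qed


theorem mainTheorem2:
  fixes a :: "ereal measure" and K :: real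
  assumes "L_density a" and "symmetric_L a" and "K > 0"
  shows "L_density (symsat_density K a) \<and> symmetric_L (symsat_density K a)
         \<and> degraded (sat_density K a) (symsat_density K a)"
proof -
  interpret prob_space a using assms(1) by (simp add: L_density_def)
  have sa: "sets a = sets borel" using assms(1) by (simp add: L_density_def)
  have spa: "space a = UNIV" using sets_eq_imp_space_eq[OF sa] by simp
  have Kp: "K > 0" by fact
  define S where "S = {x::ereal. \<bar>x\<bar> < ereal K}"
  define G where "G = {x::ereal. ereal K \<le> \<bar>x\<bar>}"
  define P where "P = {x::ereal. ereal K \<le> x}"
  define N where "N = {x::ereal. x \<le> - ereal K}"
  have SGPN: "S \<in> sets a" "G \<in> sets a" "P \<in> sets a" "N \<in> sets a"
    unfolding S_def G_def P_def N_def sa using sets_S sets_G sets_P sets_N by auto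
  define \<gamma> where "\<gamma> = measure a G"
  define \<alpha> where "\<alpha> = measure a P"
  define \<beta> where "\<beta> = measure a N"
  define e where "e = exp (- K)"
  define p where "p = exp (- K) / (1 + exp (- K))"
  have e_pos: "0 < e" and e_lt1: "e < 1" unfolding e_def using Kp by auto
  have p_eq: "p = e / (1 + e)" and p1_eq: "1 - p = 1 / (1 + e)"
  proof -
    have den: "1 + exp (- K) \<noteq> 0" by (smt (verit) exp_gt_zero)
    show "p = e / (1 + e)" "1 - p = 1 / (1 + e)" unfolding p_def e_def using den by (auto simp: field_simps)
  qed
  have p_pos: "0 \<le> p" "p \<le> 1" using e_pos unfolding p_eq by (auto simp: field_simps)
  define R1 where "R1 = scale_measure (ennreal (\<gamma> * p)) (return borel (- ereal K))"
  define R2 where "R2 = scale_measure (ennreal (\<gamma> * (1 - p))) (return borel (ereal K))"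
  define D where "D = density a (indicator S)"
  have rep: "symsat_density K a = msum3 R1 R2 D"
    unfolding R1_def R2_def D_def \<gamma>_def p_def G_def S_def by (rule symsat_rep[OF sa])
  have sR: "sets R1 = sets borel" "sets R2 = sets R1" "sets D = sets R1"
    unfolding R1_def R2_def D_def using sa by simp_all
  have sets_ss: "sets (symsat_density K a) = sets borel"
    unfolding rep using sets_msum3[OF sR(2,3)] sR(1) by simp
  have space_ss: "space (symsat_density K a) = UNIV"
    using sets_eq_imp_space_eq[OF sets_ss] by simp
  have em_ss: "emeasure (symsat_density K a) X =
      ennreal (\<gamma> * p) * indicator X (- ereal K) + ennreal (\<gamma> * (1 - p)) * indicator X (ereal K)
      + emeasure a (S \<inter> X)" if X: "X \<in> sets borel" for X
  proof -
    have "emeasure D X = emeasure a (S \<inter> X)" unfolding D_def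
      using emeasure_restricted[of S a X] sa X SGPN by simp
    then show ?thesis unfolding rep using emeasure_msum3[OF sR(2,3)] X sR(1)
      by (simp add: R1_def R2_def)
  qed
  have SG: "S = space a - G" unfolding S_def G_def spa by auto
  have aS: "emeasure a S = ennreal (1 - \<gamma>)"
    unfolding SG \<gamma>_def using prob_compl[OF SGPN(2)] emeasure_eq_measure by simp
  have g01: "0 \<le> \<gamma>" "\<gamma> \<le> 1" unfolding \<gamma>_def by auto
  have L: "L_density (symsat_density K a)"
    unfolding L_density_def
  proof
    show "sets (symsat_density K a) = sets borel" by (rule sets_ss)
    show "prob_space (symsat_density K a)"
    proof (rule prob_spaceI)
      have "emeasure (symsat_density K a) UNIV = ennreal (\<gamma> * p) + ennreal (\<gamma> * (1 - p)) + ennreal (1 - \<gamma>)"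
        using em_ss[of UNIV] aS by simp
      also have "\<dots> = ennreal (\<gamma> * p + \<gamma> * (1 - p) + (1 - \<gamma>))"
        using g01 p_pos by (simp add: ennreal_plus)
      also have "\<gamma> * p + \<gamma> * (1 - p) + (1 - \<gamma>) = 1" by (simp add: algebra_simps)
      finally show "emeasure (symsat_density K a) (space (symsat_density K a)) = 1"
        unfolding space_ss by simp
    qed
  qed
  have nn_ss: "(\<integral>\<^sup>+x. g x \<partial>symsat_density K a) = ennreal (\<gamma> * p) * g (- ereal K)
      + ennreal (\<gamma> * (1 - p)) * g (ereal K) + (\<integral>\<^sup>+x. indicator S x * g x \<partial>a)"
    if gm: "g \<in> borel_measurable borel" for g
  proof -
    have gR1: "g \<in> borel_measurable R1" using gm by (simp add: measurable_cong_sets[OF sR(1) refl])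
    have "(\<integral>\<^sup>+x. g x \<partial>R1) = ennreal (\<gamma> * p) * g (- ereal K)"
      unfolding R1_def using gm by (simp add: nn_integral_scale_measure nn_integral_return)
    moreover have "(\<integral>\<^sup>+x. g x \<partial>R2) = ennreal (\<gamma> * (1 - p)) * g (ereal K)"
      unfolding R2_def using gm by (simp add: nn_integral_scale_measure nn_integral_return)
    moreover have "(\<integral>\<^sup>+x. g x \<partial>D) = (\<integral>\<^sup>+x. indicator S x * g x \<partial>a)"
      unfolding D_def
    proof (rule nn_integral_density)
      show "indicator S \<in> borel_measurable a" using SGPN(1) by (rule borel_measurable_indicator)
      show "g \<in> borel_measurable a" using gm by (simp add: measurable_cong_sets[OF sa refl])
    qed
    ultimately show ?thesis unfolding rep using nn_integral_msum3[OF sR(2,3) gR1] by simp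
  qed
  have Sym: "symmetric_L (symsat_density K a)"
    unfolding symmetric_L_def
  proof (intro allI impI)
    fix f :: "ereal \<Rightarrow> real"
    assume fm: "f \<in> borel_measurable borel" and fb: "bounded (range f)" and fnn: "\<forall>x. 0 \<le> f x"
    note fm[measurable]
    define g where "g x = indicator S x * f x" for x
    have gm: "g \<in> borel_measurable borel" unfolding g_def using SGPN(1) sa by measurable
    have gb: "bounded (range g)"
    proof -
      from fb obtain B where B: "\<And>x. \<bar>f x\<bar> \<le> B" unfolding bounded_iff by auto
      have "\<bar>g x\<bar> \<le> B" for x using B[of x] unfolding g_def by (auto simp: indicator_def)
      then show ?thesis unfolding bounded_iff by auto
    qed
    have gnn: "\<forall>x. 0 \<le> g x" using fnn unfolding g_def by (auto simp: indicator_def)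
    have symg: "(\<integral>\<^sup>+ x. ennreal (g (- x)) \<partial>a) = (\<integral>\<^sup>+ x. exp_neg_ereal x * ennreal (g x) \<partial>a)"
      using assms(2) gm gb gnn unfolding symmetric_L_def by blast
    have Sneg: "(- x \<in> S) = (x \<in> S)" for x unfolding S_def by simp
    have i1: "(\<integral>\<^sup>+x. indicator S x * ennreal (f (- x)) \<partial>a) = (\<integral>\<^sup>+ x. ennreal (g (- x)) \<partial>a)"
      by (rule nn_integral_cong) (auto simp: g_def indicator_def Sneg)
    have i2: "(\<integral>\<^sup>+x. indicator S x * (exp_neg_ereal x * ennreal (f x)) \<partial>a) = (\<integral>\<^sup>+ x. exp_neg_ereal x * ennreal (g x) \<partial>a)"
      by (rule nn_integral_cong) (auto simp: g_def indicator_def)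
    have m1: "(\<lambda>x. ennreal (f (- x))) \<in> borel_measurable borel" by measurable
    have m2: "(\<lambda>x. exp_neg_ereal x * ennreal (f x)) \<in> borel_measurable borel" by measurable
    have c1: "ennreal (\<gamma> * p) * ennreal (f (ereal K)) = ennreal (\<gamma> * (1 - p)) * (exp_neg_ereal (ereal K) * ennreal (f (ereal K)))"
    proof -
      have "(1 - p) * exp (- K) = 1 / (1 + e) * e" using p1_eq by (simp add: e_def)
      also have "\<dots> = p" using p_eq by simp
      finally have h: "(1 - p) * exp (- K) = p" .
      have "\<gamma> * (1 - p) * (exp (- K) * f (ereal K)) = \<gamma> * ((1 - p) * exp (- K)) * f (ereal K)"
        by (simp only: mult_ac)
      then have "\<gamma> * p * f (ereal K) = \<gamma> * (1 - p) * (exp (- K) * f (ereal K))" using h by auto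
      then show ?thesis using g01 p_pos fnn by (simp add: ennreal_mult[symmetric] mult.assoc)
    qed
    have c2: "ennreal (\<gamma> * (1 - p)) * ennreal (f (- ereal K)) = ennreal (\<gamma> * p) * (exp_neg_ereal (- ereal K) * ennreal (f (- ereal K)))"
    proof -
      have eK: "e * exp K = 1" unfolding e_def by (simp add: exp_minus)
      have "p * exp K = e * exp K / (1 + e)" using p_eq by simp
      also have "\<dots> = 1 - p" using p1_eq eK by simp
      finally have h: "p * exp K = 1 - p" .
      have "\<gamma> * p * (exp K * f (- ereal K)) = \<gamma> * (p * exp K) * f (- ereal K)"
        by (simp only: mult_ac)
      then have "\<gamma> * (1 - p) * f (- ereal K) = \<gamma> * p * (exp K * f (- ereal K))" using h by auto
      then show ?thesis using g01 p_pos fnn by (simp add: ennreal_mult[symmetric] mult.assoc)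
    qed
    show "(\<integral>\<^sup>+ x. ennreal (f (- x)) \<partial>symsat_density K a) =
          (\<integral>\<^sup>+ x. exp_neg_ereal x * ennreal (f x) \<partial>symsat_density K a)"
      unfolding nn_ss[OF m1] nn_ss[OF m2] i1 i2 symg using c1 c2 by (simp add: ac_simps)
  qed
  have PN_x: "\<not> (ereal K \<le> x \<and> x \<le> - ereal K)" for x using Kp by (cases x) auto
  have PN_neg: "(ereal K \<le> - x) = (x \<le> - ereal K)" for x by (cases x) auto
  have PN_disj: "P \<inter> N = {}" unfolding P_def N_def using PN_x by auto
  have GPN: "G = P \<union> N" unfolding G_def P_def N_def using ereal_abs_ge by auto
  have gab: "\<gamma> = \<alpha> + \<beta>" unfolding \<gamma>_def \<alpha>_def \<beta>_def GPN
    using finite_measure_Union[OF SGPN(3,4) PN_disj] .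
  have ab0: "0 \<le> \<alpha>" "0 \<le> \<beta>" unfolding \<alpha>_def \<beta>_def by auto
  have beta_le: "\<beta> \<le> e * \<alpha>"
  proof -
    define f where "f x = (indicator P x :: real)" for x
    have fm: "f \<in> borel_measurable borel" unfolding f_def using SGPN(3) sa by simp
    have fb: "bounded (range f)" unfolding bounded_iff f_def by (auto intro!: exI[of _ 1] simp: indicator_def)
    have fnn: "\<forall>x. 0 \<le> f x" unfolding f_def by simp
    have sf: "(\<integral>\<^sup>+ x. ennreal (f (- x)) \<partial>a) = (\<integral>\<^sup>+ x. exp_neg_ereal x * ennreal (f x) \<partial>a)"
      using assms(2) fm fb fnn unfolding symmetric_L_def by blast
    have "(\<integral>\<^sup>+ x. ennreal (f (- x)) \<partial>a) = (\<integral>\<^sup>+ x. indicator N x \<partial>a)"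
      using PN_neg by (intro nn_integral_cong) (auto simp: f_def P_def N_def indicator_def)
    also have "\<dots> = ennreal \<beta>" using SGPN(4) by (simp add: \<beta>_def emeasure_eq_measure)
    finally have l: "(\<integral>\<^sup>+ x. ennreal (f (- x)) \<partial>a) = ennreal \<beta>" .
    have "(\<integral>\<^sup>+ x. exp_neg_ereal x * ennreal (f x) \<partial>a) \<le> (\<integral>\<^sup>+ x. ennreal e * indicator P x \<partial>a)"
    proof (rule nn_integral_mono)
      fix x
      show "exp_neg_ereal x * ennreal (f x) \<le> ennreal e * indicator P x"
      proof (cases "x \<in> P")
        case True
        then have "exp_neg_ereal x \<le> ennreal e"
          unfolding P_def e_def by (cases x) auto
        then show ?thesis using True by (simp add: f_def)
      qed (simp add: f_def)
    qed
    also have "\<dots> = ennreal e * ennreal \<alpha>" using SGPN(3)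
      by (subst nn_integral_cmult_indicator) (auto simp: \<alpha>_def emeasure_eq_measure)
    also have "\<dots> = ennreal (e * \<alpha>)" using e_pos ab0 by (simp add: ennreal_mult)
    finally have "(\<integral>\<^sup>+ x. exp_neg_ereal x * ennreal (f x) \<partial>a) \<le> ennreal (e * \<alpha>)" .
    then have "ennreal \<beta> \<le> ennreal (e * \<alpha>)" using sf l by simp
    then show ?thesis using ab0 e_pos by (subst (asm) ennreal_le_iff) auto
  qed
  define q where "q = (if \<alpha> = \<beta> then 1 else (\<alpha> * (1 - p) - \<beta> * p) / (\<alpha> - \<beta>))"
  have qfacts: "0 \<le> q \<and> q \<le> 1 \<and> \<alpha> * q + \<beta> * (1 - q) = \<gamma> * (1 - p) \<and> \<alpha> * (1 - q) + \<beta> * q = \<gamma> * p"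
  proof (cases "\<alpha> = \<beta>")
    case True
    then have "\<alpha> = 0" using beta_le e_lt1 ab0 by (smt (verit) mult_less_cancel_right2)
    then show ?thesis using True gab by (simp add: q_def)
  next
    case False
    have "e * \<alpha> \<le> \<alpha>" using e_lt1 e_pos ab0 mult_right_mono[of e 1 \<alpha>] by simp
    then have ab: "\<beta> < \<alpha>" using False beta_le by linarith
    have pe: "p * (1 + e) = e" and p1e: "(1 - p) * (1 + e) = 1" using p_eq p1_eq e_pos by (auto simp: field_simps)
    have bp: "\<beta> * (1 - p) \<le> \<alpha> * p"
    proof -
      have "\<beta> * ((1 - p) * (1 + e)) \<le> (\<alpha> * e)" using beta_le p1e by (simp add: mult.commute)
      also have "\<alpha> * e = \<alpha> * p * (1 + e)" using pe by (simp add: mult.assoc)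
      finally have "\<beta> * (1 - p) * (1 + e) \<le> \<alpha> * p * (1 + e)" by (simp add: mult.assoc)
      then show ?thesis using e_pos by simp
    qed
    have pp: "p \<le> 1 - p"
    proof -
      have "p * (1 + e) \<le> (1 - p) * (1 + e)" using pe p1e e_lt1 by simp
      then show ?thesis using e_pos by simp
    qed
    have d: "0 < \<alpha> - \<beta>" using ab by simp
    have qd: "q * (\<alpha> - \<beta>) = \<alpha> * (1 - p) - \<beta> * p" using False d by (simp add: q_def)
    have num_nn: "0 \<le> \<alpha> * (1 - p) - \<beta> * p"
    proof -
      have "\<beta> * p \<le> \<alpha> * p" using ab p_pos by (simp add: mult_right_mono)
      also have "\<dots> \<le> \<alpha> * (1 - p)" using pp ab0 by (simp add: mult_left_mono)
      finally show ?thesis by simp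
    qed
    have q0: "0 \<le> q" using False num_nn d by (simp add: q_def)
    have q1: "q \<le> 1" using False d bp by (simp add: q_def pos_divide_le_eq algebra_simps)
    have e1: "\<alpha> * q + \<beta> * (1 - q) = \<beta> + q * (\<alpha> - \<beta>)" by (simp add: algebra_simps)
    have e2: "\<alpha> * (1 - q) + \<beta> * q = \<alpha> - q * (\<alpha> - \<beta>)" by (simp add: algebra_simps)
    show ?thesis using q0 q1 unfolding e1 e2 qd gab by (simp add: algebra_simps)
  qed
  from qfacts have q0: "0 \<le> q" and q1: "q \<le> 1"
    and eq1: "\<alpha> * q + \<beta> * (1 - q) = \<gamma> * (1 - p)" and eq2: "\<alpha> * (1 - q) + \<beta> * q = \<gamma> * p" by auto
  define M1 where "M1 = msum3 (scale_measure (ennreal q) (return borel (ereal K)))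
      (scale_measure (ennreal (1 - q)) (return borel (- ereal K))) (null_measure borel)"
  define M2 where "M2 = msum3 (scale_measure (ennreal q) (return borel (- ereal K)))
      (scale_measure (ennreal (1 - q)) (return borel (ereal K))) (null_measure borel)"
  have M1s: "sets M1 = sets borel" "space M1 = UNIV" unfolding M1_def
    by (subst sets_msum3 space_msum3; simp add: space_scale_measure)+
  have M2s: "sets M2 = sets borel" "space M2 = UNIV" unfolding M2_def
    by (subst sets_msum3 space_msum3; simp add: space_scale_measure)+
  have M1e: "emeasure M1 X = ennreal q * indicator X (ereal K) + ennreal (1 - q) * indicator X (- ereal K) + 0"
    if "X \<in> sets borel" for X unfolding M1_def using that by (subst emeasure_msum3) simp_all
  have M2e: "emeasure M2 X = ennreal q * indicator X (- ereal K) + ennreal (1 - q) * indicator X (ereal K) + 0"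
    if "X \<in> sets borel" for X unfolding M2_def using that by (subst emeasure_msum3) simp_all
  have qsum: "ennreal q + ennreal (1 - q) = 1" using q0 q1 by (simp add: ennreal_plus[symmetric])
  have M1p: "M1 \<in> space (prob_algebra borel)" unfolding space_prob_algebra
    using M1s M1e[of UNIV] qsum by (auto intro!: prob_spaceI)
  have M2p: "M2 \<in> space (prob_algebra borel)" unfolding space_prob_algebra
    using M2s M2e[of UNIV] qsum by (auto intro!: prob_spaceI simp: add.commute)
  have KK: "- ereal K \<noteq> ereal K" using Kp by simp
  define W where "W y = (if y = ereal K then M1 else if y = - ereal K then M2 else return borel y)" for y
  have Wm: "W \<in> borel \<rightarrow>\<^sub>M prob_algebra borel"
    unfolding W_def[abs_def]
    by (intro measurable_If measurable_const[OF M1p] measurable_const[OF M2p] measurable_return_prob_space) simp_all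
  have Wsym: "emeasure (W (- y)) (uminus ` B) = emeasure (W y) B" if B: "B \<in> sets borel" for y B
  proof -
    have uB: "uminus ` B \<in> sets borel" using uminus_image_sets[OF B] .
    have iu: "indicator (uminus ` B) x = (indicator B (- x) :: ennreal)" for x by (rule indicator_uminus_image')
    consider "y = ereal K" | "y = - ereal K" | "y \<noteq> ereal K" "y \<noteq> - ereal K" by blast
    then show ?thesis
    proof cases
      case 1 then show ?thesis using KK uB B by (simp add: W_def M1e M2e iu add.commute)
    next
      case 2 then show ?thesis using KK uB B by (simp add: W_def M1e M2e iu add.commute)
    next
      case 3
      then have "- y \<noteq> ereal K" "- y \<noteq> - ereal K"
        by (metis ereal_uminus_uminus)+
      then show ?thesis using 3 uB B by (simp add: W_def iu)
    qed
  qed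
  have Deg: "degraded (sat_density K a) (symsat_density K a)"
    unfolding degraded_def
  proof (intro exI[of _ W] conjI ballI allI)
    show "W \<in> borel \<rightarrow>\<^sub>M prob_algebra borel" by (rule Wm)
    fix y and B :: "ereal set" assume "B \<in> sets borel"
    then show "emeasure (W (- y)) (uminus ` B) = emeasure (W y) B" by (rule Wsym)
  next
    fix B :: "ereal set" assume B: "B \<in> sets borel"
    have satm: "sat K \<in> a \<rightarrow>\<^sub>M borel"
      using sat_measurable[OF Kp] by (simp add: measurable_cong_sets[OF sa refl])
    have WBm: "(\<lambda>y. emeasure (W y) B) \<in> borel_measurable borel"
      using measurable_compose[OF measurable_prob_algebraD[OF Wm] measurable_emeasure_subprob_algebra[OF B]] .
    have "(\<integral>\<^sup>+ y. emeasure (W y) B \<partial>sat_density K a) = (\<integral>\<^sup>+ x. emeasure (W (sat K x)) B \<partial>a)"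
      unfolding sat_density_def by (rule nn_integral_distr[OF satm]) (simp add: WBm)
    also have "\<dots> = (\<integral>\<^sup>+ x. emeasure M1 B * indicator P x + (emeasure M2 B * indicator N x
                         + indicator (S \<inter> B) x) \<partial>a)"
    proof (rule nn_integral_cong)
      fix x
      show "emeasure (W (sat K x)) B = emeasure M1 B * indicator P x + (emeasure M2 B * indicator N x
                         + indicator (S \<inter> B) x)"
      proof (cases "ereal K \<le> x")
        case True
        then have "x \<notin> N" "x \<notin> S" using PN_x unfolding N_def S_def by (auto simp: ereal_abs_lt)
        then show ?thesis using True sat_alt[OF Kp, of x] by (simp add: W_def P_def)
      next
        case F1: False
        show ?thesis
        proof (cases "x \<le> - ereal K")
          case True
          then have "x \<notin> S" unfolding S_def by (auto simp: ereal_abs_lt)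
          then show ?thesis using True F1 KK sat_alt[OF Kp, of x] by (simp add: W_def P_def N_def)
        next
          case False
          then have "x \<in> S" "x \<noteq> ereal K" "x \<noteq> - ereal K" using F1 unfolding S_def
            by (auto simp: ereal_abs_lt not_le)
          then show ?thesis using False F1 sat_alt[OF Kp, of x] B by (simp add: W_def P_def N_def indicator_def)
        qed
      qed
    qed
    also have "\<dots> = emeasure M1 B * emeasure a P + (emeasure M2 B * emeasure a N + emeasure a (S \<inter> B))"
      using SGPN B sa by (simp add: nn_integral_add nn_integral_cmult_indicator)
    also have "\<dots> = (ennreal q * indicator B (ereal K) + ennreal (1 - q) * indicator B (- ereal K) + 0) * ennreal \<alpha>
        + (ennreal q * indicator B (- ereal K) + ennreal (1 - q) * indicator B (ereal K) + 0) * ennreal \<beta>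
        + emeasure a (S \<inter> B)"
      using SGPN B by (simp add: M1e M2e \<alpha>_def \<beta>_def emeasure_eq_measure add.assoc)
    also have "\<dots> = ennreal (\<gamma> * (1 - p)) * indicator B (ereal K) + ennreal (\<gamma> * p) * indicator B (- ereal K)
        + emeasure a (S \<inter> B)"
      unfolding ennreal_lin[OF q0 q1 ab0] eq1 eq2 ..
    also have "\<dots> = emeasure (symsat_density K a) B"
      using B by (simp add: em_ss add.commute add.left_commute)
    finally show "emeasure (symsat_density K a) B = (\<integral>\<^sup>+ y. emeasure (W y) B \<partial>sat_density K a)" ..
  qed
  show ?thesis using L Sym Deg by blast
qed


end
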